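(* Let $\{\psi_i\}_{i=1}^N$ be a frame for $\mathbb{R}^d$ with analysis operator $\Psi$ and frame operator $S=\Psi^\top\Psi$, and let $\{\varphi_i\}_{i=1}^N$ be its canonical dual frame, $\varphi_i=S^{-1}\psi_i$. Then the set $\{(\varphi_i,\psi_i)\}_{i=1}^N$ is cyclically monotone.
   Context: A finite frame is a finite spanning set of $\mathbb{R}^d$; its analysis operator $\Psi\in\mathbb{R}^{N\times d}$ has rows $\psi_i^\top$. A set $S\subset\mathbb{R}^d\times\mathbb{R}^d$ is cyclically monotone if for every finite subset $\{(x_1,y_1),\dots,(x_n,y_n)\}\subset S$ and every permutation $\sigma$ of $\{1,\dots,n\}$, $\sum_i\langle x_i,y_i\rangle\ge\sum_i\langle x_i,y_{\sigma(i)}\rangle$. *)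

theory Defs
  imports "HOL-Analysis.Analysis" "HOL-Combinatorics.Permutations"
begin

definition cyclically_monotone :: "('a::real_inner \<times> 'a) set \<Rightarrow> bool" where
  "cyclically_monotone S \<longleftrightarrow>
     (\<forall>(n::nat) (p::nat \<Rightarrow> 'a \<times> 'a) \<sigma>.
        p ` {..<n} \<subseteq> S \<longrightarrow> inj_on p {..<n} \<longrightarrow> \<sigma> permutes {..<n} \<longrightarrow>
        (\<Sum>i<n. fst (p i) \<bullet> snd (p i)) \<ge> (\<Sum>i<n. fst (p i) \<bullet> snd (p (\<sigma> i))))"

text \<open>Frame operator S = Psi^T Psi = sum_i psi_i psi_i^T, where the analysis operator Psi has rows psi_i.\<close>
definition frame_operator :: "nat \<Rightarrow> (nat \<Rightarrow> real^'d) \<Rightarrow> real^'d^'d" where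
  "frame_operator N \<psi> = (\<Sum>i<N. (\<chi> j k. \<psi> i $ j * \<psi> i $ k))"

definition is_frame :: "nat \<Rightarrow> (nat \<Rightarrow> real^'d) \<Rightarrow> bool" where
  "is_frame N \<psi> \<longleftrightarrow> span (\<psi> ` {..<N}) = UNIV"

definition canonical_dual :: "nat \<Rightarrow> (nat \<Rightarrow> real^'d) \<Rightarrow> nat \<Rightarrow> real^'d" where
  "canonical_dual N \<psi> i = matrix_inv (frame_operator N \<psi>) *v \<psi> i"

end

theory Submission
  imports Defs
begin

lemma fo_apply:
  fixes \<psi> :: "nat \<Rightarrow> real^'d"
  shows "frame_operator N \<psi> *v z = (\<Sum>i<N. (\<psi> i \<bullet> z) *\<^sub>R \<psi> i)"
proof -
  have "(frame_operator N \<psi> *v z) $ j = (\<Sum>i<N. (\<psi> i \<bullet> z) *\<^sub>R \<psi> i) $ j" for j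
  proof -
    have "(frame_operator N \<psi> *v z) $ j = (\<Sum>k\<in>UNIV. (\<Sum>i<N. \<psi> i $ j * \<psi> i $ k) * z $ k)"
      by (simp add: matrix_vector_mult_def frame_operator_def sum_component)
    also have "\<dots> = (\<Sum>i<N. \<Sum>k\<in>UNIV. \<psi> i $ j * \<psi> i $ k * z $ k)"
      by (simp add: sum_distrib_right sum.swap[of _ UNIV])
    also have "\<dots> = (\<Sum>i<N. (\<psi> i \<bullet> z) * \<psi> i $ j)"
      by (simp add: inner_vec_def sum_distrib_left sum_distrib_right mult_ac)
    finally show ?thesis by (simp add: sum_component)
  qed
  then show ?thesis by (simp add: vec_eq_iff)
qed

lemma fo_sym:
  fixes \<psi> :: "nat \<Rightarrow> real^'d"
  shows "u \<bullet> (frame_operator N \<psi> *v v) = (frame_operator N \<psi> *v u) \<bullet> v"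
  by (simp add: fo_apply inner_sum_left inner_sum_right mult.commute inner_commute)

lemma fo_quad:
  fixes \<psi> :: "nat \<Rightarrow> real^'d"
  shows "z \<bullet> (frame_operator N \<psi> *v z) = (\<Sum>i<N. (\<psi> i \<bullet> z)^2)"
  by (simp add: fo_apply inner_sum_right power2_eq_square inner_commute)

lemma fo_inv:
  fixes \<psi> :: "nat \<Rightarrow> real^'d"
  assumes "is_frame N \<psi>"
  shows "invertible (frame_operator N \<psi>)"
proof -
  have "z = 0" if h: "frame_operator N \<psi> *v z = 0" for z
  proof -
    have "(\<Sum>i<N. (\<psi> i \<bullet> z)^2) = 0" using fo_quad[of z N \<psi>] h by simp
    then have o: "\<forall>i\<in>{..<N}. \<psi> i \<bullet> z = 0"
      by (simp add: sum_nonneg_eq_0_iff)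
    have "span (\<psi> ` {..<N}) \<subseteq> {x. x \<bullet> z = 0}"
      by (rule span_minimal) (use o in \<open>auto simp: subspace_def inner_add_left\<close>)
    then have "z \<bullet> z = 0" using assms by (auto simp: is_frame_def subset_iff)
    then show ?thesis by simp
  qed
  then show ?thesis
    using matrix_left_invertible_ker invertible_left_inverse by metis
qed

lemma cm_general:
  fixes B :: "real^'d \<Rightarrow> real^'d"
  assumes sym: "\<And>x y. x \<bullet> B y = B x \<bullet> y"
    and psd: "\<And>x. x \<bullet> B x \<ge> 0"
    and lin: "linear B"
    and perm: "\<sigma> permutes {..<n}"
  shows "(\<Sum>i<n. B (y i) \<bullet> y i) \<ge> (\<Sum>i<n. B (y i) \<bullet> y (\<sigma> i))"
proof -
  have r1: "(\<Sum>i<n. B (y (\<sigma> i)) \<bullet> y (\<sigma> i)) = (\<Sum>i<n. B (y i) \<bullet> y i)"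
    using sum.permute[OF perm, of "\<lambda>i. B (y i) \<bullet> y i"] by (simp add: comp_def)
  have r2: "y (\<sigma> i) \<bullet> B (y i) = B (y i) \<bullet> y (\<sigma> i)" for i
    using sym[of "y (\<sigma> i)" "y i"] by (simp add: inner_commute)
  have r3: "y i \<bullet> B (y (\<sigma> i)) = B (y i) \<bullet> y (\<sigma> i)" for i
    using sym[of "y i" "y (\<sigma> i)"] by simp
  have e: "(y i - y (\<sigma> i)) \<bullet> B (y i - y (\<sigma> i)) =
      B (y i) \<bullet> y i - 2 * (B (y i) \<bullet> y (\<sigma> i)) + B (y (\<sigma> i)) \<bullet> y (\<sigma> i)" for i
    using r2[of i] r3[of i]
    by (simp add: linear_diff[OF lin] inner_diff_left inner_diff_right inner_commute)
  have "0 \<le> (\<Sum>i<n. (y i - y (\<sigma> i)) \<bullet> B (y i - y (\<sigma> i)))"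
    by (rule sum_nonneg) (simp add: psd)
  also have "\<dots> = 2 * (\<Sum>i<n. B (y i) \<bullet> y i) - 2 * (\<Sum>i<n. B (y i) \<bullet> y (\<sigma> i))"
    by (simp add: e sum.distrib sum_subtractf r1 sum_distrib_left)
  finally show ?thesis by simp
qed

theorem mainTheorem6:
  fixes N :: nat and \<psi> :: "nat \<Rightarrow> real^'d"
  assumes "is_frame N \<psi>"
  shows "cyclically_monotone ((\<lambda>i. (canonical_dual N \<psi> i, \<psi> i)) ` {..<N})"
proof -
  define M where "M = frame_operator N \<psi>"
  define B where "B = (\<lambda>x. matrix_inv M *v x)"
  have inv: "invertible M" using fo_inv[OF assms] by (simp add: M_def)
  then have MB: "M ** matrix_inv M = mat 1"
    unfolding matrix_inv_def invertible_def by (rule someI_ex[where P="\<lambda>A'. M ** A' = mat 1 \<and> A' ** M = mat 1", THEN conjunct1])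
  have MBx: "M *v B x = x" for x
    by (simp add: B_def matrix_vector_mul_assoc MB)
  have sym: "x \<bullet> B y = B x \<bullet> y" for x y
  proof -
    have "x \<bullet> B y = (M *v B x) \<bullet> B y" by (simp add: MBx)
    also have "\<dots> = B x \<bullet> (M *v B y)" using fo_sym[of "B x" N \<psi> "B y"] by (simp add: M_def)
    finally show ?thesis by (simp add: MBx)
  qed
  have psd: "x \<bullet> B x \<ge> 0" for x
  proof -
    have "x \<bullet> B x = B x \<bullet> (M *v B x)" by (simp add: MBx inner_commute)
    also have "\<dots> \<ge> 0" unfolding M_def fo_quad by (simp add: sum_nonneg)
    finally show ?thesis .
  qed
  have lin: "linear B" unfolding B_def by (simp add: matrix_vector_mul_linear)
  show ?thesis
    unfolding cyclically_monotone_def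
  proof (intro allI impI)
    fix n and p :: "nat \<Rightarrow> (real^'d) \<times> (real^'d)" and \<sigma>
    assume ps: "p ` {..<n} \<subseteq> (\<lambda>i. (canonical_dual N \<psi> i, \<psi> i)) ` {..<N}"
      and "inj_on p {..<n}" and perm: "\<sigma> permutes {..<n}"
    have fp: "fst (p i) = B (snd (p i))" if "i < n" for i
      using ps that by (auto simp: canonical_dual_def B_def M_def)
    have "(\<Sum>i<n. fst (p i) \<bullet> snd (p (\<sigma> i))) = (\<Sum>i<n. B (snd (p i)) \<bullet> snd (p (\<sigma> i)))"
      by (rule sum.cong) (auto simp: fp)
    also have "\<dots> \<le> (\<Sum>i<n. B (snd (p i)) \<bullet> snd (p i))"
      by (rule cm_general[OF sym psd lin perm])
    also have "\<dots> = (\<Sum>i<n. fst (p i) \<bullet> snd (p i))"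
      by (rule sum.cong) (auto simp: fp)
    finally show "(\<Sum>i<n. fst (p i) \<bullet> snd (p (\<sigma> i))) \<le> (\<Sum>i<n. fst (p i) \<bullet> snd (p i))" .
  qed
qed

end
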